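(* For any theory $\Gamma$ and any consistent set $T$ of explicit literals: $\langle T,T\rangle$ is an equilibrium model of $\Gamma$ if and only if $T$ is a $\subseteq$-minimal model of $\Gamma^T_+=\{\varphi^T_+\mid\varphi\in\Gamma\}$, i.e., $T$ classically satisfies every formula of $\Gamma^T_+$ and no consistent set $H\subsetneq T$ does.
   Context: Fix a set $\mathit{At}$ of atoms. An explicit literal is $p$ or $\sim p$; a set of explicit literals is consistent if it never contains both $p$ and $\sim p$. Formulas: $\varphi ::= p\mid\bot\mid\varphi\wedge\varphi\mid\varphi\vee\varphi\mid\varphi\to\varphi\mid\sim\varphi$ with $\neg\varphi:=\varphi\to\bot$, $\top:=\neg\bot$; a theory is a set of formulas. Classical satisfaction/falsification by a consistent set $T$: $T\not\models\bot$, $T=\!\!|\;\bot$; $T\models p$ iff $p\in T$, $T=\!\!|\;p$ iff $\sim p\in T$; $\wedge$: satisfied iff both, falsified iff at least one falsified; $\vee$: satisfied iff at least one, falsified iff both falsified; $T\models\sim\varphi$ iff $T=\!\!|\;\varphi$, $T=\!\!|\;\sim\varphi$ iff $T\models\varphi$; $T\models\varphi\to\psi$ iff $T\not\models\varphi$ or $T\models\psi$, $T=\!\!|\;\varphi\to\psi$ iff $T\models\varphi$ and $T=\!\!|\;\psi$. ${\cal X}_5$-interpretations: pairs $\langle H,T\rangle$ of consistent sets of explicit literals with $H\subseteq T$, with $\langle H,T\rangle\not\models\bot$, $=\!\!|\;\bot$; $\models p$ iff $p\in H$, $=\!\!|\;p$ iff $\sim p\in H$; $\wedge,\vee,\sim$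 as in the classical clauses with $\langle H,T\rangle$ in place of $T$; $\langle H,T\rangle\models\varphi\to\psi$ iff (i) $\langle H,T\rangle\not\models\varphi$ or $\langle H,T\rangle\models\psi$ and (ii) $\langle T,T\rangle\not\models\varphi$ or $\langle T,T\rangle\models\psi$; $\langle H,T\rangle=\!\!|\;\varphi\to\psi$ iff $\langle T,T\rangle\models\varphi$ and $\langle H,T\rangle=\!\!|\;\psi$. $\langle T,T\rangle$ is an equilibrium model of $\Gamma$ if it satisfies every formula of $\Gamma$ and no $\langle H,T\rangle$ with $H\subsetneq T$ does. Transformations $\varphi^T_+$, $\varphi^T_-$ (clauses for $\neg\alpha$ take priority over those for $\to$): $\varphi^T_+=\bot$ if $T\not\models\varphi$; otherwise $p^T_+=p$; $(\alpha\otimes\beta)^T_+=\alpha^T_+\otimes\beta^T_+$ for $\otimes\in\{\wedge,\vee\}$; $(\alpha\to\beta)^T_+=\neg(\alpha^T_+)\vee\beta^T_+$; $(\neg\alpha)^T_+=\neg(\alpha^T_+)$; $(\sim\alpha)^T_+=\sim(\alpha^T_-)$. $\varphi^T_-=\top$ if $T$ does not falsify $\varphi$; otherwise $p^T_-=p$; $\bot^T_-=\bot$; $(\alpha\otimes\beta)^T_-=\alpha^T_-\otimes\beta^T_-$; $(\alpha\to\beta)^T_-=\beta^T_-$; $(\neg\alpha)^T_-=\bot$; $(\sim\alpha)^T_-=\sim(\alpha^T_+)$. *)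

theory Defs
  imports Main
begin

datatype 'a lit = Pos 'a | Neg 'a

datatype 'a fm = Atom 'a | Bot | And "'a fm" "'a fm" | Or "'a fm" "'a fm"
  | Imp "'a fm" "'a fm" | Snot "'a fm"

definition Neg_fm :: "'a fm \<Rightarrow> 'a fm" where "Neg_fm \<phi> = Imp \<phi> Bot"
definition Top :: "'a fm" where "Top = Neg_fm Bot"

definition consistent :: "'a lit set \<Rightarrow> bool" where
  "consistent S \<longleftrightarrow> (\<forall>p. \<not> (Pos p \<in> S \<and> Neg p \<in> S))"

text \<open>Classical satisfaction (True) / falsification (False) by a set T.\<close>
fun csat :: "bool \<Rightarrow> 'a lit set \<Rightarrow> 'a fm \<Rightarrow> bool" where
  "csat True T Bot = False"
| "csat False T Bot = True"
| "csat True T (Atom p) = (Pos p \<in> T)"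
| "csat False T (Atom p) = (Neg p \<in> T)"
| "csat True T (And a b) = (csat True T a \<and> csat True T b)"
| "csat False T (And a b) = (csat False T a \<or> csat False T b)"
| "csat True T (Or a b) = (csat True T a \<or> csat True T b)"
| "csat False T (Or a b) = (csat False T a \<and> csat False T b)"
| "csat True T (Snot a) = csat False T a"
| "csat False T (Snot a) = csat True T a"
| "csat True T (Imp a b) = (\<not> csat True T a \<or> csat True T b)"
| "csat False T (Imp a b) = (csat True T a \<and> csat False T b)"

text \<open>X5 satisfaction (True) / falsification (False) by the pair (H,T).\<close>
fun xsat :: "bool \<Rightarrow> 'a lit set \<Rightarrow> 'a lit set \<Rightarrow> 'a fm \<Rightarrow> bool" where
  "xsat True H T Bot = False"
| "xsat False H T Bot = True"
| "xsat True H T (Atom p) = (Pos p \<in> H)"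
| "xsat False H T (Atom p) = (Neg p \<in> H)"
| "xsat True H T (And a b) = (xsat True H T a \<and> xsat True H T b)"
| "xsat False H T (And a b) = (xsat False H T a \<or> xsat False H T b)"
| "xsat True H T (Or a b) = (xsat True H T a \<or> xsat True H T b)"
| "xsat False H T (Or a b) = (xsat False H T a \<and> xsat False H T b)"
| "xsat True H T (Snot a) = xsat False H T a"
| "xsat False H T (Snot a) = xsat True H T a"
| "xsat True H T (Imp a b) = ((\<not> xsat True H T a \<or> xsat True H T b)
                              \<and> (\<not> xsat True T T a \<or> xsat True T T b))"
| "xsat False H T (Imp a b) = (xsat True T T a \<and> xsat False H T b)"

definition x5_interp :: "'a lit set \<Rightarrow> 'a lit set \<Rightarrow> bool" where
  "x5_interp H T \<longleftrightarrow> consistent H \<and> consistent T \<and> H \<subseteq> T"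

definition equilibrium_model :: "'a fm set \<Rightarrow> 'a lit set \<Rightarrow> bool" where
  "equilibrium_model \<Gamma> T \<longleftrightarrow> x5_interp T T \<and> (\<forall>\<phi>\<in>\<Gamma>. xsat True T T \<phi>)
     \<and> \<not> (\<exists>H. H \<subset> T \<and> x5_interp H T \<and> (\<forall>\<phi>\<in>\<Gamma>. xsat True H T \<phi>))"

text \<open>Transformations; True = plus, False = minus. The clauses for a negation
  Imp a Bot take priority over those for Imp.\<close>
fun tr :: "bool \<Rightarrow> 'a lit set \<Rightarrow> 'a fm \<Rightarrow> 'a fm" where
  "tr True T \<phi> = (if \<not> csat True T \<phi> then Bot else (case \<phi> of
       Atom p \<Rightarrow> Atom p
     | Bot \<Rightarrow> Bot
     | And a b \<Rightarrow> And (tr True T a) (tr True T b)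
     | Or a b \<Rightarrow> Or (tr True T a) (tr True T b)
     | Imp a Bot \<Rightarrow> Neg_fm (tr True T a)
     | Imp a b \<Rightarrow> Or (Neg_fm (tr True T a)) (tr True T b)
     | Snot a \<Rightarrow> Snot (tr False T a)))"
| "tr False T \<phi> = (if \<not> csat False T \<phi> then Top else (case \<phi> of
       Atom p \<Rightarrow> Atom p
     | Bot \<Rightarrow> Bot
     | And a b \<Rightarrow> And (tr False T a) (tr False T b)
     | Or a b \<Rightarrow> Or (tr False T a) (tr False T b)
     | Imp a Bot \<Rightarrow> Bot
     | Imp a b \<Rightarrow> tr False T b
     | Snot a \<Rightarrow> Snot (tr True T a)))"

definition plus_theory :: "'a fm set \<Rightarrow> 'a lit set \<Rightarrow> 'a fm set" where
  "plus_theory \<Gamma> T = (\<lambda>\<phi>. tr True T \<phi>) ` \<Gamma>"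

end

theory Submission
  imports Defs
begin

declare tr.simps[simp del]

lemma trP_Atom: "tr True T (Atom p) = (if \<not> csat True T (Atom p) then Bot else Atom p)"
  by (simp only: tr.simps[of T "Atom p"]) simp
lemma trP_Bot: "tr True T Bot = Bot"
  by (simp only: tr.simps[of T Bot]) simp
lemma trP_And: "tr True T (And a b) = (if \<not> csat True T (And a b) then Bot else And (tr True T a) (tr True T b))"
  by (simp only: tr.simps[of T "And a b"]) simp
lemma trP_Or: "tr True T (Or a b) = (if \<not> csat True T (Or a b) then Bot else Or (tr True T a) (tr True T b))"
  by (simp only: tr.simps[of T "Or a b"]) simp
lemma trP_Snot: "tr True T (Snot a) = (if \<not> csat True T (Snot a) then Bot else Snot (tr False T a))"
  by (simp only: tr.simps[of T "Snot a"]) simp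
lemma trP_Imp: "tr True T (Imp a c) = (if \<not> csat True T (Imp a c) then Bot else
   if c = Bot then Neg_fm (tr True T a) else Or (Neg_fm (tr True T a)) (tr True T c))"
  by (simp only: tr.simps[of T "Imp a c"]) (cases c; simp)
lemma trM_Atom: "tr False T (Atom p) = (if \<not> csat False T (Atom p) then Top else Atom p)"
  by (simp only: tr.simps[of T "Atom p"]) simp
lemma trM_Bot: "tr False T Bot = Bot"
  by (simp only: tr.simps[of T Bot]) simp
lemma trM_And: "tr False T (And a b) = (if \<not> csat False T (And a b) then Top else And (tr False T a) (tr False T b))"
  by (simp only: tr.simps[of T "And a b"]) simp
lemma trM_Or: "tr False T (Or a b) = (if \<not> csat False T (Or a b) then Top else Or (tr False T a) (tr False T b))"
  by (simp only: tr.simps[of T "Or a b"]) simp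
lemma trM_Snot: "tr False T (Snot a) = (if \<not> csat False T (Snot a) then Top else Snot (tr True T a))"
  by (simp only: tr.simps[of T "Snot a"]) simp
lemma trM_Imp: "tr False T (Imp a c) = (if \<not> csat False T (Imp a c) then Top else
   if c = Bot then Bot else tr False T c)"
  by (simp only: tr.simps[of T "Imp a c"]) (cases c; simp)

lemmas tr_eqs = trP_Atom trP_Bot trP_And trP_Or trP_Snot trP_Imp
  trM_Atom trM_Bot trM_And trM_Or trM_Snot trM_Imp

lemma xsat_TT: "xsat b T T \<phi> = csat b T \<phi>"
  by (induction \<phi> arbitrary: b) (case_tac b; simp)+

lemma persist: "H \<subseteq> T \<Longrightarrow> xsat b H T \<phi> \<Longrightarrow> xsat b T T \<phi>"
  by (induction \<phi> arbitrary: b) (case_tac b; auto)+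

lemma persist': "H \<subseteq> T \<Longrightarrow> xsat b H T \<phi> \<Longrightarrow> csat b T \<phi>"
  using persist xsat_TT by metis

lemma key: "H \<subseteq> T \<Longrightarrow> xsat b H T \<phi> = csat b H (tr b T \<phi>)"
proof (induction \<phi> arbitrary: b)
  case (Imp a c)
  have p: "\<And>b \<phi>. xsat b H T \<phi> \<Longrightarrow> csat b T \<phi>" using persist' Imp.prems by blast
  show ?case using Imp p
    by (cases b) (auto simp: Neg_fm_def Top_def tr_eqs xsat_TT)
qed (case_tac b; auto simp: Neg_fm_def Top_def xsat_TT tr_eqs dest: persist')+

theorem corollary3:
  fixes \<Gamma> :: "'a fm set" and T :: "'a lit set"
  assumes "consistent T"
  shows "equilibrium_model \<Gamma> T \<longleftrightarrow>
    ((\<forall>\<psi>\<in>plus_theory \<Gamma> T. csat True T \<psi>) \<and>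
     \<not> (\<exists>H. H \<subset> T \<and> consistent H \<and> (\<forall>\<psi>\<in>plus_theory \<Gamma> T. csat True H \<psi>)))"
proof -
  have A: "(\<forall>\<phi>\<in>\<Gamma>. xsat True H T \<phi>) = (\<forall>\<psi>\<in>plus_theory \<Gamma> T. csat True H \<psi>)"
    if "H \<subseteq> T" for H
    using key[OF that, of True] unfolding plus_theory_def by simp
  have B: "(\<exists>H. H \<subset> T \<and> (consistent H \<and> consistent T \<and> H \<subseteq> T) \<and> (\<forall>\<phi>\<in>\<Gamma>. xsat True H T \<phi>))
      = (\<exists>H. H \<subset> T \<and> consistent H \<and> (\<forall>\<psi>\<in>plus_theory \<Gamma> T. csat True H \<psi>))"
  proof
    assume "\<exists>H. H \<subset> T \<and> (consistent H \<and> consistent T \<and> H \<subseteq> T) \<and> (\<forall>\<phi>\<in>\<Gamma>. xsat True H T \<phi>)"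
    then obtain H where "H \<subset> T" "consistent H" "\<forall>\<phi>\<in>\<Gamma>. xsat True H T \<phi>" by blast
    then show "\<exists>H. H \<subset> T \<and> consistent H \<and> (\<forall>\<psi>\<in>plus_theory \<Gamma> T. csat True H \<psi>)"
      using A[of H] by blast
  next
    assume "\<exists>H. H \<subset> T \<and> consistent H \<and> (\<forall>\<psi>\<in>plus_theory \<Gamma> T. csat True H \<psi>)"
    then obtain H where "H \<subset> T" "consistent H" "\<forall>\<psi>\<in>plus_theory \<Gamma> T. csat True H \<psi>" by blast
    then show "\<exists>H. H \<subset> T \<and> (consistent H \<and> consistent T \<and> H \<subseteq> T) \<and> (\<forall>\<phi>\<in>\<Gamma>. xsat True H T \<phi>)"
      using A[of H] assms by blast
  qed
  show ?thesis
    unfolding equilibrium_model_def x5_interp_def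
    using A[of T] B assms by simp
qed

end
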